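(* A set $\mathcal{O}$ of upwards-closed modalities is decomposable if and only if, for all $r,r'\in TT\mathbf{1}$, whenever $r\preccurlyeq r'$, then for all $o\in\mathcal{O}$, $\mu r\in o(\{*\})$ implies $\mu r'\in o(\{*\})$.
   Context: $\Sigma$ is a signature of effect operations with arities $\alpha^n\to\alpha$, $\mathbf{N}\times\alpha^n\to\alpha$, $\alpha^{\mathbf{N}}\to\alpha$ or $\mathbf{N}\times\alpha^{\mathbf{N}}\to\alpha$. $TX$ is the set of possibly infinite labelled trees with leaves $\bot$ or elements of $X$ and internal nodes labelled by operations (or $\sigma_m$, $m\in\mathbb{N}$) with children according to arity; $t\le t'$ iff $t$ is obtained from $t'$ by replacing subtrees with $\bot$. $\mu:TTX\to TX$ is the monad multiplication, replacing each leaf of a tree of trees by that tree. $\mathbf{1}=\{*\}$. A set $\mathcal{O}$ of modalities is given with $[\![o]\!]\subseteq T\mathbf{1}$; upwards closed means $[\![o]\!]$ is upward closed under $\le$. $t[\in P]\in T\mathbf{1}$ replaces leaves in $P$ by $*$ and other $X$-leaves by $\bot$; $o(A)=\{t\in TX\mid t[\in A]\in[\![o]\!]\}$. $\mathcal{T}$ is the least class of formulas containing $o(\top),o(\bot)$ ($o\in\mathcal{O}$) closed under arbitrary $\bigvee,\bigwedge$, with $[\![o(\top)]\!]=o(\{*\})$, $[\![o(\bot)]\!]=o(\emptyset)$, unions/intersections. On $T\mathbf{1}$: $t\trianglelefteq t'$ iff $\forall\Phi\in\mathcal{T}$, $t\in[\![\Phi]\!]\Rightarrow t'\in[\![\Phi]\!]$.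 On $TT\mathbf{1}$: $r\preccurlyeq r'$ iff $\forall o\,\forall\Phi\in\mathcal{T}$, $r\in o([\![\Phi]\!])\Rightarrow r'\in o([\![\Phi]\!])$. $\mathcal{O}$ is decomposable if for all $r,r'\in TT\mathbf{1}$, $r\preccurlyeq r'$ implies $\mu r\trianglelefteq\mu r'$. *)

theory Defs
  imports Main
begin

text \<open>A signature is given by a type
  of node labels 'l (an operation, or an operation together with its natural-number
  parameter m) and an arity map ar: Some n means arity alpha^n, None means arity alpha^N.
  Children are indexed by nat; for a finite arity n the children at positions >= n are
  padding and required to be Bot (see wf_tree).\<close>

codatatype ('l, 'x) tree = Bot | Leaf 'x | Node 'l "nat \<Rightarrow> ('l, 'x) tree"

coinductive wf_tree :: "('l \<Rightarrow> nat option) \<Rightarrow> 'x set \<Rightarrow> ('l, 'x) tree \<Rightarrow> bool"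
  for ar :: "'l \<Rightarrow> nat option" and L :: "'x set" where
  wf_Bot: "wf_tree ar L Bot"
| wf_Leaf: "x \<in> L \<Longrightarrow> wf_tree ar L (Leaf x)"
| wf_Node: "(\<forall>i. wf_tree ar L (c i)) \<Longrightarrow> (\<forall>n. ar l = Some n \<longrightarrow> (\<forall>i\<ge>n. c i = Bot))
             \<Longrightarrow> wf_tree ar L (Node l c)"

definition TT :: "('l \<Rightarrow> nat option) \<Rightarrow> 'x set \<Rightarrow> ('l, 'x) tree set" where
  "TT ar X = {t. wf_tree ar X t}"

coinductive tle :: "('l, 'x) tree \<Rightarrow> ('l, 'x) tree \<Rightarrow> bool" where
  tle_Bot: "tle Bot t"
| tle_Leaf: "tle (Leaf x) (Leaf x)"
| tle_Node: "(\<forall>i. tle (c i) (c' i)) \<Longrightarrow> tle (Node l c) (Node l c')"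

text \<open>Monad multiplication: replace each leaf of a tree of trees by that tree.\<close>
primcorec mu_aux :: "(('l, ('l, 'x) tree) tree + ('l, 'x) tree) \<Rightarrow> ('l, 'x) tree" where
  "mu_aux s = (case s of
      Inl r \<Rightarrow> (case r of
          Bot \<Rightarrow> Bot
        | Leaf t \<Rightarrow> (case t of Bot \<Rightarrow> Bot | Leaf x \<Rightarrow> Leaf x
                       | Node l c \<Rightarrow> Node l (\<lambda>i. mu_aux (Inr (c i))))
        | Node l c \<Rightarrow> Node l (\<lambda>i. mu_aux (Inl (c i))))
    | Inr t \<Rightarrow> (case t of Bot \<Rightarrow> Bot | Leaf x \<Rightarrow> Leaf x
                  | Node l c \<Rightarrow> Node l (\<lambda>i. mu_aux (Inr (c i)))))"

definition mu :: "('l, ('l, 'x) tree) tree \<Rightarrow> ('l, 'x) tree" where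
  "mu r = mu_aux (Inl r)"

primcorec restr :: "'x set \<Rightarrow> ('l, 'x) tree \<Rightarrow> ('l, unit) tree" where
  "restr P t = (case t of
      Bot \<Rightarrow> Bot
    | Leaf x \<Rightarrow> (if x \<in> P then Leaf () else Bot)
    | Node l c \<Rightarrow> Node l (\<lambda>i. restr P (c i)))"

text \<open>o(A) = {t \<in> TX | t[\<in>A] \<in> [[o]]}; sem md is [[o]].\<close>
definition omod :: "('l \<Rightarrow> nat option) \<Rightarrow> ('o \<Rightarrow> ('l, unit) tree set) \<Rightarrow> 'o \<Rightarrow> 'x set
                    \<Rightarrow> ('l, 'x) tree set" where
  "omod ar sem md A = {t \<in> TT ar UNIV. restr A t \<in> sem md}"

text \<open>Denotations of the formulas in the class \<T>: least class containing o(top), o(bot)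
  for o in Mods, closed under arbitrary disjunctions and conjunctions (interpreted in T 1).\<close>
inductive_set Tsem :: "('l \<Rightarrow> nat option) \<Rightarrow> 'o set \<Rightarrow> ('o \<Rightarrow> ('l, unit) tree set)
                       \<Rightarrow> ('l, unit) tree set set"
  for ar Mods sem where
  Tsem_top: "md \<in> Mods \<Longrightarrow> omod ar sem md {()} \<in> Tsem ar Mods sem"
| Tsem_bot: "md \<in> Mods \<Longrightarrow> omod ar sem md {} \<in> Tsem ar Mods sem"
| Tsem_Sup: "(\<forall>A\<in>S. A \<in> Tsem ar Mods sem) \<Longrightarrow> \<Union>S \<in> Tsem ar Mods sem"
| Tsem_Inf: "(\<forall>A\<in>S. A \<in> Tsem ar Mods sem) \<Longrightarrow> (\<Inter>S) \<inter> TT ar UNIV \<in> Tsem ar Mods sem"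

definition upwards_closed :: "('l \<Rightarrow> nat option) \<Rightarrow> ('l, unit) tree set \<Rightarrow> bool" where
  "upwards_closed ar P \<longleftrightarrow> (\<forall>t\<in>P. \<forall>t'\<in>TT ar UNIV. tle t t' \<longrightarrow> t' \<in> P)"

definition tpre :: "('l \<Rightarrow> nat option) \<Rightarrow> 'o set \<Rightarrow> ('o \<Rightarrow> ('l, unit) tree set)
                    \<Rightarrow> ('l, unit) tree \<Rightarrow> ('l, unit) tree \<Rightarrow> bool" where
  "tpre ar Mods sem t t' \<longleftrightarrow> (\<forall>\<Phi>\<in>Tsem ar Mods sem. t \<in> \<Phi> \<longrightarrow> t' \<in> \<Phi>)"

definition rpre :: "('l \<Rightarrow> nat option) \<Rightarrow> 'o set \<Rightarrow> ('o \<Rightarrow> ('l, unit) tree set)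
                    \<Rightarrow> ('l, ('l, unit) tree) tree \<Rightarrow> ('l, ('l, unit) tree) tree \<Rightarrow> bool" where
  "rpre ar Mods sem r r' \<longleftrightarrow>
     (\<forall>md\<in>Mods. \<forall>\<Phi>\<in>Tsem ar Mods sem. r \<in> omod ar sem md \<Phi> \<longrightarrow> r' \<in> omod ar sem md \<Phi>)"

definition decomposable :: "('l \<Rightarrow> nat option) \<Rightarrow> 'o set \<Rightarrow> ('o \<Rightarrow> ('l, unit) tree set) \<Rightarrow> bool" where
  "decomposable ar Mods sem \<longleftrightarrow>
     (\<forall>r\<in>TT ar (TT ar UNIV). \<forall>r'\<in>TT ar (TT ar UNIV).
        rpre ar Mods sem r r' \<longrightarrow> tpre ar Mods sem (mu r) (mu r'))"

end

theory Submission
  imports Defs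
begin

lemma tree_eq_coinduct:
  assumes "R a b"
    and "\<And>a b. R a b \<Longrightarrow> (a = Bot \<and> b = Bot) \<or> (\<exists>x. a = Leaf x \<and> b = Leaf x) \<or>
           (\<exists>l c c'. a = Node l c \<and> b = Node l c' \<and> (\<forall>i. R (c i) (c' i)))"
  shows "a = b"
  using assms(1)
proof (coinduction arbitrary: a b rule: tree.coinduct)
  case (Eq_tree a b)
  from assms(2)[OF Eq_tree] show ?case by (auto simp: rel_fun_def)
qed

lemma mu_aux_simps[simp]:
  "mu_aux (Inl Bot) = Bot"
  "mu_aux (Inl (Leaf Bot)) = Bot"
  "mu_aux (Inl (Leaf (Leaf x))) = Leaf x"
  "mu_aux (Inl (Leaf (Node l c))) = Node l (\<lambda>i. mu_aux (Inr (c i)))"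
  "mu_aux (Inl (Node l c')) = Node l (\<lambda>i. mu_aux (Inl (c' i)))"
  "mu_aux (Inr Bot) = Bot"
  "mu_aux (Inr (Leaf x)) = Leaf x"
  "mu_aux (Inr (Node l c)) = Node l (\<lambda>i. mu_aux (Inr (c i)))"
  by (subst mu_aux.code; simp)+

lemma restr_simps[simp]:
  "restr P Bot = Bot"
  "restr P (Leaf x) = (if x \<in> P then Leaf () else Bot)"
  "restr P (Node l c) = Node l (\<lambda>i. restr P (c i))"
  by (subst restr.code; simp)+

primcorec lmap :: "('x \<Rightarrow> 'y) \<Rightarrow> ('l, 'x) tree \<Rightarrow> ('l, 'y) tree" where
  "lmap f t = (case t of Bot \<Rightarrow> Bot | Leaf x \<Rightarrow> Leaf (f x)
     | Node l c \<Rightarrow> Node l (\<lambda>i. lmap f (c i)))"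

lemma lmap_simps[simp]:
  "lmap f Bot = Bot"
  "lmap f (Leaf x) = Leaf (f x)"
  "lmap f (Node l c) = Node l (\<lambda>i. lmap f (c i))"
  by (subst lmap.code; simp)+

lemma mu_Inr: "mu_aux (Inr t) = t"
proof (rule tree_eq_coinduct[where R = "\<lambda>a b. a = mu_aux (Inr b)"])
  fix a b :: "('a,'b) tree" assume "a = mu_aux (Inr b)"
  then show "(a = Bot \<and> b = Bot) \<or> (\<exists>x. a = Leaf x \<and> b = Leaf x) \<or>
           (\<exists>l c c'. a = Node l c \<and> b = Node l c' \<and> (\<forall>i. c i = mu_aux (Inr (c' i))))"
    by (cases b) auto
qed simp

lemma restr_restr_empty: fixes t :: "('l,'x) tree" shows "restr P (restr {} t) = restr {} t"
proof (rule tree_eq_coinduct[where R = "\<lambda>a b. \<exists>t::('l,'x) tree. a = restr P (restr {} t) \<and> b = restr {} t"])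
  fix a b :: "('l,unit) tree" assume "\<exists>t::('l,'x) tree. a = restr P (restr {} t) \<and> b = restr {} t"
  then obtain t :: "('l,'x) tree" where "a = restr P (restr {} t)" "b = restr {} t" by blast
  then show "(a = Bot \<and> b = Bot) \<or> (\<exists>x. a = Leaf x \<and> b = Leaf x) \<or>
           (\<exists>l c c'. a = Node l c \<and> b = Node l c' \<and> (\<forall>i. \<exists>t::('l,'x) tree. c i = restr P (restr {} t) \<and> c' i = restr {} t))"
    by (cases t) auto
qed blast

lemma restr_lmap: "restr P (lmap f r) = restr (f -` P) r"
proof (rule tree_eq_coinduct[where R = "\<lambda>a b. \<exists>r. a = restr P (lmap f r) \<and> b = restr (f -` P) r"])
  fix a b :: "('a,unit) tree" assume "\<exists>r. a = restr P (lmap f r) \<and> b = restr (f -` P) r"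
  then obtain r where "a = restr P (lmap f r)" "b = restr (f -` P) r" by blast
  then show "(a = Bot \<and> b = Bot) \<or> (\<exists>x. a = Leaf x \<and> b = Leaf x) \<or>
           (\<exists>l c c'. a = Node l c \<and> b = Node l c' \<and> (\<forall>i. \<exists>r. c i = restr P (lmap f r) \<and> c' i = restr (f -` P) r))"
    by (cases r) auto
qed blast

lemma restr_inter: "wf_tree ar L r \<Longrightarrow> restr (A \<inter> L) r = restr A r"
proof (rule tree_eq_coinduct[where R = "\<lambda>a b. \<exists>r. wf_tree ar L r \<and> a = restr (A \<inter> L) r \<and> b = restr A r"])
  fix a b :: "('a,unit) tree" assume "\<exists>r. wf_tree ar L r \<and> a = restr (A \<inter> L) r \<and> b = restr A r"
  then obtain r where "wf_tree ar L r" "a = restr (A \<inter> L) r" "b = restr A r" by blast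
  then show "(a = Bot \<and> b = Bot) \<or> (\<exists>x. a = Leaf x \<and> b = Leaf x) \<or>
           (\<exists>l c c'. a = Node l c \<and> b = Node l c' \<and> (\<forall>i. \<exists>r. wf_tree ar L r \<and> c i = restr (A \<inter> L) r \<and> c' i = restr A r))"
    by (cases rule: wf_tree.cases) auto
qed blast

lemma mu_lmap_gen:
  fixes s :: "('l, ('l,'x) tree) tree + ('l,'x) tree"
  shows "mu_aux (map_sum (lmap (restr {})) (restr {}) s) = restr {} (mu_aux s)"
proof (rule tree_eq_coinduct[where R = "\<lambda>a b. \<exists>s::('l, ('l,'x) tree) tree + ('l,'x) tree. a = mu_aux (map_sum (lmap (restr {})) (restr {}) s) \<and> b = restr {} (mu_aux s)"])
  fix a b :: "('l,unit) tree"
  assume "\<exists>s::('l, ('l,'x) tree) tree + ('l,'x) tree. a = mu_aux (map_sum (lmap (restr {})) (restr {}) s) \<and> b = restr {} (mu_aux s)"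
  then obtain s :: "('l, ('l,'x) tree) tree + ('l,'x) tree" where ab: "a = mu_aux (map_sum (lmap (restr {})) (restr {}) s)" "b = restr {} (mu_aux s)" by blast
  show "(a = Bot \<and> b = Bot) \<or> (\<exists>x. a = Leaf x \<and> b = Leaf x) \<or>
           (\<exists>l c c'. a = Node l c \<and> b = Node l c' \<and> (\<forall>i. \<exists>s::('l, ('l,'x) tree) tree + ('l,'x) tree. c i = mu_aux (map_sum (lmap (restr {})) (restr {}) s) \<and> c' i = restr {} (mu_aux s)))"
  proof (cases s)
    case (Inl r)
    then show ?thesis using ab
    proof (cases r)
      case (Leaf t)
      then show ?thesis using ab Inl
      proof (cases t)
        case (Node l c)
        then show ?thesis using ab Inl Leaf
          by simp (metis map_sum.simps(2))
      qed auto
    next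
      case (Node l c)
      then show ?thesis using ab Inl
        by simp (metis map_sum.simps(1))
    qed auto
  next
    case (Inr t)
    then show ?thesis using ab
    proof (cases t)
      case (Node l c)
      then show ?thesis using ab Inr
        by simp (metis map_sum.simps(2))
    qed auto
  qed
qed blast

lemma mu_lmap: "mu (lmap (restr {}) r) = restr {} (mu r)"
  unfolding mu_def using mu_lmap_gen[of "Inl r"] by simp

lemma wf_mono: "wf_tree ar L t \<Longrightarrow> L \<subseteq> L' \<Longrightarrow> wf_tree ar L' t"
proof (coinduction arbitrary: t rule: wf_tree.coinduct)
  case (wf_tree t)
  then show ?case by (cases rule: wf_tree.cases) auto
qed

lemma wf_restr: "wf_tree ar L t \<Longrightarrow> wf_tree ar UNIV (restr P t)"
proof (coinduction arbitrary: t rule: wf_tree.coinduct)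
  case (wf_tree t)
  then show ?case by (cases rule: wf_tree.cases) auto
qed

lemma wf_lmap: "wf_tree ar L r \<Longrightarrow> (\<forall>x\<in>L. f x \<in> L') \<Longrightarrow> wf_tree ar L' (lmap f r)"
proof (coinduction arbitrary: r rule: wf_tree.coinduct)
  case (wf_tree r)
  then show ?case by (cases rule: wf_tree.cases) auto
qed

lemma wf_mu_gen:
  assumes "case s of Inl r \<Rightarrow> wf_tree ar (TT ar UNIV) r | Inr t \<Rightarrow> wf_tree ar UNIV t"
  shows "wf_tree ar UNIV (mu_aux s)"
  using assms
proof (coinduction arbitrary: s rule: wf_tree.coinduct)
  case (wf_tree s)
  show ?case
  proof (cases s)
    case (Inl r)
    with wf_tree have "wf_tree ar (TT ar UNIV) r" by simp
    then show ?thesis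
    proof (cases rule: wf_tree.cases)
      case wf_Bot then show ?thesis using Inl by simp
    next
      case (wf_Leaf t)
      then have "wf_tree ar UNIV t" by (simp add: TT_def)
      then show ?thesis
      proof (cases rule: wf_tree.cases)
        case (wf_Node c l)
        have "\<forall>i. \<exists>s'. mu_aux (Inr (c i)) = mu_aux s' \<and> (case s' of Inl x \<Rightarrow> wf_tree ar (TT ar UNIV) x
                             | Inr x \<Rightarrow> wf_tree ar UNIV x)"
          using wf_Node by (metis sum.case(2))
        then show ?thesis using Inl wf_Leaf wf_Node by auto
      qed (use Inl wf_Leaf in auto)
    next
      case (wf_Node c l)
      have "\<forall>i. \<exists>s'. mu_aux (Inl (c i)) = mu_aux s' \<and> (case s' of Inl x \<Rightarrow> wf_tree ar (TT ar UNIV) x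
                             | Inr x \<Rightarrow> wf_tree ar UNIV x)"
        using wf_Node by (metis sum.case(1))
      then show ?thesis using Inl wf_Node by auto
    qed
  next
    case (Inr t)
    with wf_tree have "wf_tree ar UNIV t" by simp
    then show ?thesis
    proof (cases rule: wf_tree.cases)
      case (wf_Node c l)
      have "\<forall>i. \<exists>s'. mu_aux (Inr (c i)) = mu_aux s' \<and> (case s' of Inl x \<Rightarrow> wf_tree ar (TT ar UNIV) x
                           | Inr x \<Rightarrow> wf_tree ar UNIV x)"
        using wf_Node by (metis sum.case(2))
      then show ?thesis using Inr wf_Node by auto
    qed (use Inr in auto)
  qed
qed

lemma wf_mu: "wf_tree ar (TT ar UNIV) r \<Longrightarrow> wf_tree ar UNIV (mu r)"
  unfolding mu_def by (rule wf_mu_gen) simp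

lemma TT_restr: "t \<in> TT ar UNIV \<Longrightarrow> restr P t \<in> TT ar UNIV"
  unfolding TT_def using wf_restr by blast

lemma pre_Tsem:
  assumes "\<Phi> \<in> Tsem ar Mods sem"
  shows "{t \<in> TT ar (UNIV :: unit set). restr {} t \<in> \<Phi>} \<in> Tsem ar Mods sem"
  using assms
proof (induction rule: Tsem.induct)
  case (Tsem_top md)
  have "{t \<in> TT ar (UNIV :: unit set). restr {} t \<in> omod ar sem md {()}} = omod ar sem md {}"
    unfolding omod_def using TT_restr by (auto simp: restr_restr_empty)
  then show ?case using Tsem.Tsem_bot[where ar=ar and sem=sem and Mods=Mods, OF Tsem_top] by simp
next
  case (Tsem_bot md)
  have "{t \<in> TT ar (UNIV :: unit set). restr {} t \<in> omod ar sem md {}} = omod ar sem md {}"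
    unfolding omod_def using TT_restr by (auto simp: restr_restr_empty)
  then show ?case using Tsem.Tsem_bot[where ar=ar and sem=sem and Mods=Mods, OF Tsem_bot] by simp
next
  case (Tsem_Sup S)
  have "{t \<in> TT ar (UNIV :: unit set). restr {} t \<in> \<Union>S} = \<Union>((\<lambda>A. {t \<in> TT ar (UNIV :: unit set). restr {} t \<in> A}) ` S)"
    by auto
  moreover have "\<Union>((\<lambda>A. {t \<in> TT ar (UNIV :: unit set). restr {} t \<in> A}) ` S) \<in> Tsem ar Mods sem"
    by (rule Tsem.Tsem_Sup) (use Tsem_Sup in auto)
  ultimately show ?case by simp
next
  case (Tsem_Inf S)
  have "{t \<in> TT ar (UNIV :: unit set). restr {} t \<in> \<Inter>S \<inter> TT ar UNIV} = \<Inter>((\<lambda>A. {t \<in> TT ar (UNIV :: unit set). restr {} t \<in> A}) ` S) \<inter> TT ar UNIV"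
    using TT_restr by auto
  moreover have "\<Inter>((\<lambda>A. {t \<in> TT ar (UNIV :: unit set). restr {} t \<in> A}) ` S) \<inter> TT ar UNIV \<in> Tsem ar Mods sem"
    by (rule Tsem.Tsem_Inf) (use Tsem_Inf in auto)
  ultimately show ?case by simp
qed

lemma omod_lmap:
  assumes r: "r \<in> TT ar (TT ar UNIV)"
  shows "lmap (restr {}) r \<in> omod ar sem md \<Phi> \<longleftrightarrow> r \<in> omod ar sem md {t \<in> TT ar UNIV. restr {} t \<in> \<Phi>}"
proof -
  have w: "wf_tree ar (TT ar UNIV) r" using r by (simp add: TT_def)
  have "wf_tree ar UNIV r" using wf_mono[OF w] by simp
  moreover have "wf_tree ar UNIV (lmap (restr {}) r)" using wf_lmap[OF w, of _ UNIV] by simp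
  moreover have "restr \<Phi> (lmap (restr {}) r) = restr {t \<in> TT ar UNIV. restr {} t \<in> \<Phi>} r"
  proof -
    have "restr \<Phi> (lmap (restr {}) r) = restr (restr {} -` \<Phi>) r" by (rule restr_lmap)
    also have "\<dots> = restr (restr {} -` \<Phi> \<inter> TT ar UNIV) r" using restr_inter[OF w] by metis
    also have "restr {} -` \<Phi> \<inter> TT ar UNIV = {t \<in> TT ar UNIV. restr {} t \<in> \<Phi>}" by auto
    finally show ?thesis .
  qed
  ultimately show ?thesis unfolding omod_def TT_def by simp
qed

lemma lmap_TT: "r \<in> TT ar (TT ar UNIV) \<Longrightarrow> lmap (restr {}) r \<in> TT ar (TT ar UNIV)"
  unfolding TT_def mem_Collect_eq by (erule wf_lmap) (auto intro: wf_restr)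

lemma mu_TT: "r \<in> TT ar (TT ar UNIV) \<Longrightarrow> mu r \<in> TT ar UNIV"
  unfolding TT_def mem_Collect_eq by (rule wf_mu[unfolded TT_def])

theorem lemma4p16:
  fixes ar :: "'l \<Rightarrow> nat option"
    and Mods :: "'o set"
    and sem :: "'o \<Rightarrow> ('l, unit) tree set"
  assumes "\<forall>md\<in>Mods. sem md \<subseteq> TT ar UNIV"
    and "\<forall>md\<in>Mods. upwards_closed ar (sem md)"
  shows "decomposable ar Mods sem \<longleftrightarrow>
    (\<forall>r\<in>TT ar (TT ar UNIV). \<forall>r'\<in>TT ar (TT ar UNIV).
       rpre ar Mods sem r r' \<longrightarrow>
       (\<forall>md\<in>Mods. mu r \<in> omod ar sem md {()} \<longrightarrow> mu r' \<in> omod ar sem md {()}))"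
proof
  assume "decomposable ar Mods sem"
  then show "\<forall>r\<in>TT ar (TT ar UNIV). \<forall>r'\<in>TT ar (TT ar UNIV).
       rpre ar Mods sem r r' \<longrightarrow>
       (\<forall>md\<in>Mods. mu r \<in> omod ar sem md {()} \<longrightarrow> mu r' \<in> omod ar sem md {()})"
  proof (intro ballI impI)
    fix r r' md
    assume "decomposable ar Mods sem" and r: "r \<in> TT ar (TT ar UNIV)" and r': "r' \<in> TT ar (TT ar UNIV)"
      and "rpre ar Mods sem r r'" and md: "md \<in> Mods" and m: "mu r \<in> omod ar sem md {()}"
    then have "tpre ar Mods sem (mu r) (mu r')" unfolding decomposable_def by blast
    moreover have "omod ar sem md {()} \<in> Tsem ar Mods sem" using md by (rule Tsem.Tsem_top)
    ultimately show "mu r' \<in> omod ar sem md {()}" using m unfolding tpre_def by blast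
  qed
next
  assume H: "\<forall>r\<in>TT ar (TT ar UNIV). \<forall>r'\<in>TT ar (TT ar UNIV).
       rpre ar Mods sem r r' \<longrightarrow>
       (\<forall>md\<in>Mods. mu r \<in> omod ar sem md {()} \<longrightarrow> mu r' \<in> omod ar sem md {()})"
  show "decomposable ar Mods sem"
    unfolding decomposable_def tpre_def
  proof (intro ballI impI)
    fix r r' \<Phi>
    assume r: "r \<in> TT ar (TT ar UNIV)" and r': "r' \<in> TT ar (TT ar UNIV)"
      and rp: "rpre ar Mods sem r r'" and \<Phi>: "\<Phi> \<in> Tsem ar Mods sem"
    show "mu r \<in> \<Phi> \<Longrightarrow> mu r' \<in> \<Phi>"
      using \<Phi>
    proof (induction rule: Tsem.induct)
      case (Tsem_top md)
      then show ?case using H[rule_format, OF r r' rp] by blast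
    next
      case (Tsem_bot md)
      let ?r0 = "lmap (restr {}) r" and ?r0' = "lmap (restr {}) r'"
      have rp0: "rpre ar Mods sem ?r0 ?r0'"
        unfolding rpre_def
      proof (intro ballI impI)
        fix md' \<Psi> assume "md' \<in> Mods" "\<Psi> \<in> Tsem ar Mods sem" "?r0 \<in> omod ar sem md' \<Psi>"
        then show "?r0' \<in> omod ar sem md' \<Psi>"
          using rp pre_Tsem[of \<Psi>] omod_lmap[OF r, of sem md' \<Psi>] omod_lmap[OF r', of sem md' \<Psi>] unfolding rpre_def by blast
      qed
      have eq: "x \<in> omod ar sem md {} \<longleftrightarrow> mu (lmap (restr {}) y) \<in> omod ar sem md {()}"
        if "y \<in> TT ar (TT ar UNIV)" "x = mu y" for x y
        using that mu_TT[OF that(1)] TT_restr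
        unfolding omod_def by (auto simp: mu_lmap restr_restr_empty)
      have "mu ?r0 \<in> omod ar sem md {()}" using eq[OF r refl] Tsem_bot by blast
      then have "mu ?r0' \<in> omod ar sem md {()}"
        using H[rule_format, OF lmap_TT[OF r] lmap_TT[OF r'] rp0] Tsem_bot by blast
      then show ?case using eq[OF r' refl] by blast
    next
      case (Tsem_Sup S)
      then show ?case by blast
    next
      case (Tsem_Inf S)
      then show ?case using mu_TT[OF r'] by blast
    qed
  qed
qed

end
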